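(* Let $p_1,p_2,\dots$ be integers $\ge 2$ and let $H_k=\wr_{i=1}^{k}C_{p_i}$, realized as the group of automorphisms of the first $k$ levels of the spherically homogeneous rooted tree with branching numbers $p_1,p_2,\dots$ whose vertex permutation at every vertex of level $i-1$ is a power of the cyclic shift on $p_i$ letters. Let $f_{k,k+1}:H_k\to H_{k+1}$ be the injective homomorphism extending an automorphism by trivial vertex permutations at level $k$ (i.e. $g\mapsto g(e,\dots,e)$), and $f_{k,j}$ the compositions. Then the direct limit $\varinjlim H_k$ of this direct system has commutator width $1$.
   Context: The commutator width $cw(G)$ of a group $G$ is the least $n$ such that every element of $G'$ is a product of at most $n$ commutators. *)

theory Defs
  imports "HOL-Algebra.Algebra"
begin

definition commutator :: "('a, 'b) monoid_scheme \<Rightarrow> 'a \<Rightarrow> 'a \<Rightarrow> 'a" where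
  "commutator G x y = x \<otimes>\<^bsub>G\<^esub> y \<otimes>\<^bsub>G\<^esub> inv\<^bsub>G\<^esub> x \<otimes>\<^bsub>G\<^esub> inv\<^bsub>G\<^esub> y"

fun comm_prod :: "('a, 'b) monoid_scheme \<Rightarrow> ('a \<times> 'a) list \<Rightarrow> 'a" where
  "comm_prod G [] = \<one>\<^bsub>G\<^esub>"
| "comm_prod G ((a, b) # xs) = commutator G a b \<otimes>\<^bsub>G\<^esub> comm_prod G xs"

definition prod_of_commutators :: "('a, 'b) monoid_scheme \<Rightarrow> nat \<Rightarrow> 'a \<Rightarrow> bool" where
  "prod_of_commutators G n x \<longleftrightarrow>
     (\<exists>xs. length xs \<le> n \<and> set xs \<subseteq> carrier G \<times> carrier G \<and> x = comm_prod G xs)"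

definition commutator_width :: "('a, 'b) monoid_scheme \<Rightarrow> nat" where
  "commutator_width G =
     (LEAST n. \<forall>x \<in> derived G (carrier G). prod_of_commutators G n x)"

definition dl_rel :: "(nat \<Rightarrow> ('a, 'b) monoid_scheme) \<Rightarrow> (nat \<Rightarrow> nat \<Rightarrow> 'a \<Rightarrow> 'a)
    \<Rightarrow> ((nat \<times> 'a) \<times> (nat \<times> 'a)) set" where
  "dl_rel G f = {((k, x), (l, y)). x \<in> carrier (G k) \<and> y \<in> carrier (G l) \<and>
                   (\<exists>j \<ge> max k l. f k j x = f l j y)}"

definition dl_mult :: "(nat \<Rightarrow> ('a, 'b) monoid_scheme) \<Rightarrow> (nat \<Rightarrow> nat \<Rightarrow> 'a \<Rightarrow> 'a)
    \<Rightarrow> (nat \<times> 'a) set \<Rightarrow> (nat \<times> 'a) set \<Rightarrow> (nat \<times> 'a) set" where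
  "dl_mult G f A B =
     (let a = (SOME a. a \<in> A); b = (SOME b. b \<in> B); j = max (fst a) (fst b)
      in dl_rel G f `` {(j, f (fst a) j (snd a) \<otimes>\<^bsub>G j\<^esub> f (fst b) j (snd b))})"

definition direct_limit :: "(nat \<Rightarrow> ('a, 'b) monoid_scheme) \<Rightarrow> (nat \<Rightarrow> nat \<Rightarrow> 'a \<Rightarrow> 'a)
    \<Rightarrow> ((nat \<times> 'a) set) monoid" where
  "direct_limit G f =
     \<lparr> carrier = (SIGMA k:UNIV. carrier (G k)) // dl_rel G f,
       monoid.mult = dl_mult G f,
       one = dl_rel G f `` {(0, \<one>\<^bsub>G 0\<^esub>)} \<rparr>"

fun compose_steps :: "(nat \<Rightarrow> 'a \<Rightarrow> 'a) \<Rightarrow> nat \<Rightarrow> nat \<Rightarrow> 'a \<Rightarrow> 'a" where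
  "compose_steps step k 0 = id"
| "compose_steps step k (Suc n) = step (k + n) \<circ> compose_steps step k n"

definition system_maps :: "(nat \<Rightarrow> 'a \<Rightarrow> 'a) \<Rightarrow> nat \<Rightarrow> nat \<Rightarrow> 'a \<Rightarrow> 'a" where
  "system_maps step k j = compose_steps step k (j - k)"

(* branching numbers p 1, p 2, ...; vertices of level j are lists [x_1,...,x_j] with x_i < p i.
   V p k = vertices of the first k levels (levels 0..k). *)
definition tree_verts :: "(nat \<Rightarrow> nat) \<Rightarrow> nat \<Rightarrow> nat list set" where
  "tree_verts p k = {v. length v \<le> k \<and> (\<forall>i < length v. v ! i < p (Suc i))}"

(* automorphism of the first k levels whose vertex permutation at every vertex u
   of level i-1 (i \<le> k) is a power of the cyclic shift x \<mapsto> x+1 mod p i;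
   extended by the identity outside the truncated tree *)
definition cyc_aut :: "(nat \<Rightarrow> nat) \<Rightarrow> nat \<Rightarrow> (nat list \<Rightarrow> nat list) \<Rightarrow> bool" where
  "cyc_aut p k g \<longleftrightarrow>
     (\<forall>v. v \<notin> tree_verts p k \<longrightarrow> g v = v) \<and>
     bij_betw g (tree_verts p k) (tree_verts p k) \<and>
     (\<forall>v \<in> tree_verts p k. length (g v) = length v \<and>
                           (\<forall>i \<le> length v. g (take i v) = take i (g v))) \<and>
     (\<forall>u \<in> tree_verts p k. length u < k \<longrightarrow>
        (\<exists>m::nat. \<forall>x < p (Suc (length u)).
            g (u @ [x]) = g u @ [(x + m) mod p (Suc (length u))]))"

definition H :: "(nat \<Rightarrow> nat) \<Rightarrow> nat \<Rightarrow> (nat list \<Rightarrow> nat list) monoid" where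
  "H p k = \<lparr> carrier = {g. cyc_aut p k g}, monoid.mult = (\<circ>), one = id \<rparr>"

definition extend_step :: "(nat \<Rightarrow> nat) \<Rightarrow> nat \<Rightarrow> (nat list \<Rightarrow> nat list) \<Rightarrow> (nat list \<Rightarrow> nat list)" where
  "extend_step p k g = (\<lambda>v. if v \<in> tree_verts p (Suc k) then g (take k v) @ drop k v else v)"

end

theory Submission
  imports Defs
begin

definition aut :: "(nat \<Rightarrow> nat) \<Rightarrow> (nat list \<Rightarrow> int) \<Rightarrow> nat list \<Rightarrow> nat list" where
  "aut p M v = map (\<lambda>i. nat ((int (v!i) + M (take i v)) mod int (p (Suc i)))) [0..<length v]"

definition ext :: "(nat \<Rightarrow> nat) \<Rightarrow> nat \<Rightarrow> (nat list \<Rightarrow> nat list) \<Rightarrow> nat list \<Rightarrow> nat list" where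
  "ext p k f v = (if v \<in> tree_verts p k then f v else v)"

definition pm :: "(nat list \<Rightarrow> nat list) \<Rightarrow> nat list \<Rightarrow> int" where
  "pm g u = int (g (u @ [0]) ! length u)"

lemma aut_length[simp]: "length (aut p M v) = length v"
  by (simp add: aut_def)

lemma aut_nth: "i < length v \<Longrightarrow> aut p M v ! i = nat ((int (v!i) + M (take i v)) mod int (p (Suc i)))"
  by (simp add: aut_def)

lemma aut_take: "take i (aut p M v) = aut p M (take i v)"
proof (rule nth_equalityI)
  show "length (take i (aut p M v)) = length (aut p M (take i v))" by simp
next
  fix j assume "j < length (take i (aut p M v))"
  then have j: "j < i" "j < length v" by auto
  then show "take i (aut p M v) ! j = aut p M (take i v) ! j"
    by (simp add: aut_nth take_take min_def)
qed

lemma aut_snoc: "aut p M (u @ [x]) = aut p M u @ [nat ((int x + M u) mod int (p (Suc (length u))))]"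
  by (rule nth_equalityI) (auto simp: aut_nth nth_append less_Suc_eq)

lemma tv_take: "v \<in> tree_verts p k \<Longrightarrow> take i v \<in> tree_verts p k"
  by (auto simp: tree_verts_def)

lemma tv_snoc: "(u @ [x] \<in> tree_verts p k) \<longleftrightarrow> u \<in> tree_verts p k \<and> length u < k \<and> x < p (Suc (length u))"
  by (auto simp: tree_verts_def nth_append less_Suc_eq split: if_splits)

lemma aut_tv:
  assumes pos: "\<And>i. 0 < p (Suc i)" and v: "v \<in> tree_verts p k"
  shows "aut p M v \<in> tree_verts p k"
proof -
  have "\<And>i. i < length v \<Longrightarrow> aut p M v ! i < p (Suc i)"
  proof -
    fix i assume "i < length v"
    have "(int (v!i) + M (take i v)) mod int (p (Suc i)) < int (p (Suc i))"
      using pos[of i] by simp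
    moreover have "0 \<le> (int (v!i) + M (take i v)) mod int (p (Suc i))" using pos[of i] by simp
    ultimately show "aut p M v ! i < p (Suc i)" using \<open>i < length v\<close> by (simp add: aut_nth nat_less_iff)
  qed
  then show ?thesis using v by (auto simp: tree_verts_def)
qed

lemma aut_inj:
  assumes "\<And>i. 0 < p (Suc i)"
  shows "inj_on (aut p M) (tree_verts p k)"
proof
  fix v w assume v: "v \<in> tree_verts p k" and w: "w \<in> tree_verts p k" and e: "aut p M v = aut p M w"
  have len: "length v = length w" using arg_cong[OF e, of length] by simp
  have "\<forall>i \<le> length v. take i v = take i w"
  proof
    fix i show "i \<le> length v \<longrightarrow> take i v = take i w"
    proof (induction i)
      case 0 then show ?case by simp
    next
      case (Suc i)
      show ?case
      proof
        assume si: "Suc i \<le> length v"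
        then have IH: "take i v = take i w" using Suc by simp
        have "aut p M v ! i = aut p M w ! i" using e by simp
        then have "nat ((int (v!i) + M (take i v)) mod int (p (Suc i))) = nat ((int (w!i) + M (take i w)) mod int (p (Suc i)))"
          using si len by (simp add: aut_nth)
        then have "(int (v!i) + M (take i v)) mod int (p (Suc i)) = (int (w!i) + M (take i w)) mod int (p (Suc i))"
          using assms[of i] by (simp add: nat_eq_iff)
        then have "(int (v!i) + M (take i v) - M (take i v)) mod int (p (Suc i)) = (int (w!i) + M (take i v) - M (take i v)) mod int (p (Suc i))"
          using IH by (intro mod_diff_cong) auto
        then have "int (v!i) mod int (p (Suc i)) = int (w!i) mod int (p (Suc i))"
          by simp
        moreover have "v!i < p (Suc i)" "w!i < p (Suc i)" using v w si len by (auto simp: tree_verts_def)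
        ultimately have "v!i = w!i" by simp
        then show "take (Suc i) v = take (Suc i) w" using IH si len by (simp add: take_Suc_conv_app_nth)
      qed
    qed
  qed
  then show "v = w" using len by (metis order_refl take_all)
qed

lemma finite_tv: "finite (tree_verts p k)"
proof -
  let ?B = "Max (p ` {..k}) + 1"
  have "tree_verts p k \<subseteq> {xs. set xs \<subseteq> {..<?B} \<and> length xs \<le> k}"
  proof
    fix v assume v: "v \<in> tree_verts p k"
    have "\<And>x. x \<in> set v \<Longrightarrow> x < ?B"
    proof -
      fix x assume "x \<in> set v"
      then obtain i where i: "i < length v" "v!i = x" by (auto simp: in_set_conv_nth)
      then have "x < p (Suc i)" "Suc i \<le> k" using v by (auto simp: tree_verts_def)
      moreover have "p (Suc i) \<le> Max (p ` {..k})" using \<open>Suc i \<le> k\<close> by (intro Max_ge) auto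
      ultimately show "x < ?B" by linarith
    qed
    then show "v \<in> {xs. set xs \<subseteq> {..<?B} \<and> length xs \<le> k}" using v by (auto simp: tree_verts_def)
  qed
  then show ?thesis using finite_lists_length_le[of "{..<?B}" k] finite_subset by blast
qed

lemma aut_bij:
  assumes "\<And>i. 0 < p (Suc i)"
  shows "bij_betw (aut p M) (tree_verts p k) (tree_verts p k)"
proof -
  have "aut p M ` tree_verts p k \<subseteq> tree_verts p k" using aut_tv[of p, OF assms] by blast
  then have "aut p M ` tree_verts p k = tree_verts p k"
    using endo_inj_surj[OF finite_tv _ aut_inj[of p, OF assms]] by blast
  then show ?thesis using aut_inj[of p, OF assms] by (simp add: bij_betw_def)
qed

lemma in_H: "g \<in> carrier (H p k) \<longleftrightarrow> cyc_aut p k g"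
  by (simp add: H_def)

lemma ext_aut_in_H:
  assumes pos: "\<And>i. 0 < p (Suc i)"
  shows "ext p k (aut p M) \<in> carrier (H p k)"
proof -
  have b: "bij_betw (ext p k (aut p M)) (tree_verts p k) (tree_verts p k)"
    using aut_bij[of p, OF pos] by (rule bij_betw_cong[THEN iffD1, rotated]) (simp add: ext_def)
  have lp: "\<forall>v \<in> tree_verts p k. length (ext p k (aut p M) v) = length v \<and>
        (\<forall>i \<le> length v. ext p k (aut p M) (take i v) = take i (ext p k (aut p M) v))"
    by (auto simp: ext_def tv_take aut_take)
  have sh: "\<forall>u \<in> tree_verts p k. length u < k \<longrightarrow>
        (\<exists>m::nat. \<forall>x < p (Suc (length u)).
            ext p k (aut p M) (u @ [x]) = ext p k (aut p M) u @ [(x + m) mod p (Suc (length u))])"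
  proof (intro ballI impI)
    fix u assume u: "u \<in> tree_verts p k" "length u < k"
    let ?P = "p (Suc (length u))"
    let ?m = "nat (M u mod int ?P)"
    have "\<forall>x < ?P. ext p k (aut p M) (u @ [x]) = ext p k (aut p M) u @ [(x + ?m) mod ?P]"
    proof (intro allI impI)
      fix x assume x: "x < ?P"
      have "nat ((int x + M u) mod int ?P) = (x + ?m) mod ?P"
      proof -
        have "int ((x + ?m) mod ?P) = (int x + int ?m) mod int ?P" by (simp add: zmod_int)
        also have "int ?m = M u mod int ?P" using pos[of "length u"] by simp
        also have "(int x + M u mod int ?P) mod int ?P = (int x + M u) mod int ?P" by (simp add: mod_add_right_eq)
        finally show ?thesis by simp
      qed
      then show "ext p k (aut p M) (u @ [x]) = ext p k (aut p M) u @ [(x + ?m) mod ?P]"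
        using u x by (simp add: ext_def tv_snoc aut_snoc)
    qed
    then show "\<exists>m::nat. \<forall>x < ?P. ext p k (aut p M) (u @ [x]) = ext p k (aut p M) u @ [(x + m) mod ?P]" by blast
  qed
  have out: "\<forall>v. v \<notin> tree_verts p k \<longrightarrow> ext p k (aut p M) v = v" by (simp add: ext_def)
  show ?thesis unfolding in_H cyc_aut_def
    apply (intro conjI)
       apply (rule out)
      apply (rule b)
     apply (rule lp)
    apply (rule sh)
    done
qed


lemma H_out: "g \<in> carrier (H p k) \<Longrightarrow> v \<notin> tree_verts p k \<Longrightarrow> g v = v"
  unfolding in_H cyc_aut_def by blast
lemma H_bij: "g \<in> carrier (H p k) \<Longrightarrow> bij_betw g (tree_verts p k) (tree_verts p k)"
  unfolding in_H cyc_aut_def by blast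
lemma H_tv: "g \<in> carrier (H p k) \<Longrightarrow> v \<in> tree_verts p k \<Longrightarrow> g v \<in> tree_verts p k"
  by (rule bij_betw_apply[OF H_bij])
lemma H_len: "g \<in> carrier (H p k) \<Longrightarrow> v \<in> tree_verts p k \<Longrightarrow> length (g v) = length v"
  unfolding in_H cyc_aut_def by blast
lemma H_take: "g \<in> carrier (H p k) \<Longrightarrow> v \<in> tree_verts p k \<Longrightarrow> i \<le> length v \<Longrightarrow> g (take i v) = take i (g v)"
  unfolding in_H cyc_aut_def by blast
lemma H_shift: "g \<in> carrier (H p k) \<Longrightarrow> u \<in> tree_verts p k \<Longrightarrow> length u < k \<Longrightarrow>
   \<exists>m::nat. \<forall>x < p (Suc (length u)). g (u @ [x]) = g u @ [(x + m) mod p (Suc (length u))]"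
  unfolding in_H cyc_aut_def by blast

lemma nat_mod_helper:
  assumes "0 < P"
  shows "nat ((int x + int y) mod int P) = (x + y) mod P"
  by (metis nat_int of_nat_add zmod_int)

lemma H_eq_ext:
  assumes pos: "\<And>i. 0 < p (Suc i)" and g: "g \<in> carrier (H p k)"
  shows "g = ext p k (aut p (pm g))"
proof
  fix v
  show "g v = ext p k (aut p (pm g)) v"
  proof (cases "v \<in> tree_verts p k")
    case False then show ?thesis using H_out[OF g] by (simp add: ext_def)
  next
    case True
    have "v \<in> tree_verts p k \<Longrightarrow> g v = aut p (pm g) v"
    proof (induction v rule: rev_induct)
      case Nil
      have "length (g []) = 0" using H_len[OF g Nil] by simp
      then show ?case by (simp add: aut_def)
    next
      case (snoc x u)
      let ?P = "p (Suc (length u))"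
      have u: "u \<in> tree_verts p k" "length u < k" "x < ?P" using snoc.prems by (auto simp: tv_snoc)
      have IH: "g u = aut p (pm g) u" using snoc.IH u by simp
      obtain m where m: "\<forall>x < ?P. g (u @ [x]) = g u @ [(x + m) mod ?P]" using H_shift[OF g u(1,2)] by blast
      have lu: "length (g u) = length u" using H_len[OF g u(1)] .
      have "pm g u = int ((g u @ [(0 + m) mod ?P]) ! length u)" using m pos[of "length u"] by (simp add: pm_def)
      then have pmu: "pm g u = int (m mod ?P)" using lu by (simp add: nth_append)
      have "aut p (pm g) (u @ [x]) = aut p (pm g) u @ [nat ((int x + int (m mod ?P)) mod int ?P)]"
        by (simp add: aut_snoc pmu)
      also have "nat ((int x + int (m mod ?P)) mod int ?P) = (x + m) mod ?P"
        using nat_mod_helper[OF pos[of "length u"]] by (simp add: mod_add_right_eq)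
      finally show ?case using m u IH by simp
    qed
    then show ?thesis using True by (simp add: ext_def)
  qed
qed

lemma ext_aut_comp:
  assumes pos: "\<And>i. 0 < p (Suc i)"
  shows "ext p k (aut p M1) \<circ> ext p k (aut p M2) = ext p k (aut p (\<lambda>u. M2 u + M1 (aut p M2 u)))"
proof
  fix v
  show "(ext p k (aut p M1) \<circ> ext p k (aut p M2)) v = ext p k (aut p (\<lambda>u. M2 u + M1 (aut p M2 u))) v"
  proof (cases "v \<in> tree_verts p k")
    case False then show ?thesis by (simp add: ext_def)
  next
    case True
    have eq: "aut p M1 (aut p M2 v) = aut p (\<lambda>u. M2 u + M1 (aut p M2 u)) v"
    proof (rule nth_equalityI)
      fix i assume "i < length (aut p M1 (aut p M2 v))"
      then have i: "i < length v" by simp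
      have nn: "0 \<le> (int (v ! i) + M2 (take i v)) mod int (p (Suc i))" using pos[of i] by simp
      have "aut p M1 (aut p M2 v) ! i = nat ((int (aut p M2 v ! i) + M1 (take i (aut p M2 v))) mod int (p (Suc i)))"
        using i by (simp add: aut_nth)
      also have "int (aut p M2 v ! i) = (int (v ! i) + M2 (take i v)) mod int (p (Suc i))"
        using i nn by (simp add: aut_nth)
      also have "take i (aut p M2 v) = aut p M2 (take i v)" by (rule aut_take)
      also have "((int (v ! i) + M2 (take i v)) mod int (p (Suc i)) + M1 (aut p M2 (take i v))) mod int (p (Suc i))
          = (int (v ! i) + (M2 (take i v) + M1 (aut p M2 (take i v)))) mod int (p (Suc i))"
        unfolding mod_add_left_eq by (simp only: add.assoc)
      also have "nat \<dots> = aut p (\<lambda>u. M2 u + M1 (aut p M2 u)) v ! i"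
        using i by (simp only: aut_nth)
      finally show "aut p M1 (aut p M2 v) ! i = aut p (\<lambda>u. M2 u + M1 (aut p M2 u)) v ! i" .
    qed simp
    have e1: "ext p k (aut p M2) v = aut p M2 v" using True by (simp add: ext_def)
    have e2: "ext p k (aut p M1) (aut p M2 v) = aut p M1 (aut p M2 v)"
      using aut_tv[of p, OF pos True] by (simp add: ext_def)
    have e3: "ext p k (aut p (\<lambda>u. M2 u + M1 (aut p M2 u))) v = aut p (\<lambda>u. M2 u + M1 (aut p M2 u)) v"
      using True by (simp add: ext_def)
    show ?thesis by (simp only: o_def e1 e2 e3 eq)
  qed
qed

lemma pm_ext_aut:
  assumes pos: "\<And>i. 0 < p (Suc i)" and u: "u \<in> tree_verts p k" "length u < k"
  shows "pm (ext p k (aut p M)) u = M u mod int (p (Suc (length u)))"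
proof -
  have "u @ [0] \<in> tree_verts p k" using u pos by (simp add: tv_snoc)
  then have "pm (ext p k (aut p M)) u = int (nat (M u mod int (p (Suc (length u)))))"
    by (simp add: pm_def ext_def aut_snoc nth_append)
  also have "\<dots> = M u mod int (p (Suc (length u)))" using pos[of "length u"] by simp
  finally show ?thesis .
qed

lemma ext_aut_cong:
  assumes "\<And>u. u \<in> tree_verts p k \<Longrightarrow> length u < k \<Longrightarrow>
      M u mod int (p (Suc (length u))) = M' u mod int (p (Suc (length u)))"
  shows "ext p k (aut p M) = ext p k (aut p M')"
proof
  fix v
  show "ext p k (aut p M) v = ext p k (aut p M') v"
  proof (cases "v \<in> tree_verts p k")
    case False then show ?thesis by (simp add: ext_def)
  next
    case True
    have "aut p M v = aut p M' v"
    proof (rule nth_equalityI)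
      fix i assume "i < length (aut p M v)"
      then have i: "i < length v" by simp
      have "take i v \<in> tree_verts p k" "length (take i v) < k"
        using True i tv_take[OF True] by (auto simp: tree_verts_def)
      then have e: "M (take i v) mod int (p (Suc i)) = M' (take i v) mod int (p (Suc i))"
        using assms i by fastforce
      have "(int (v!i) + M (take i v)) mod int (p (Suc i)) = (int (v!i) + M' (take i v)) mod int (p (Suc i))"
        by (metis e mod_add_right_eq)
      then show "aut p M v ! i = aut p M' v ! i" using i by (simp add: aut_nth)
    qed simp
    then show ?thesis by (simp add: ext_def)
  qed
qed

lemma id_in_H: "id \<in> carrier (H p k)"
proof -
  have "\<forall>u \<in> tree_verts p k. length u < k \<longrightarrow>
        (\<exists>m::nat. \<forall>x < p (Suc (length u)). id (u @ [x]) = id u @ [(x + m) mod p (Suc (length u))])"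
    by (intro ballI impI exI[of _ 0]) simp
  then show ?thesis unfolding in_H cyc_aut_def by simp
qed

lemma H_mult[simp]: "x \<otimes>\<^bsub>H p k\<^esub> y = x \<circ> y"
  by (simp add: H_def)
lemma H_one[simp]: "\<one>\<^bsub>H p k\<^esub> = id"
  by (simp add: H_def)

lemma H_closed:
  assumes pos: "\<And>i. 0 < p (Suc i)" and g: "g \<in> carrier (H p k)" and h: "h \<in> carrier (H p k)"
  shows "g \<circ> h \<in> carrier (H p k)"
proof -
  have "g \<circ> h = ext p k (aut p (pm g)) \<circ> ext p k (aut p (pm h))"
    using H_eq_ext[OF pos g] H_eq_ext[OF pos h] by simp
  also have "\<dots> = ext p k (aut p (\<lambda>u. pm h u + pm g (aut p (pm h) u)))"
    by (rule ext_aut_comp[of p, OF pos])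
  finally show ?thesis using ext_aut_in_H[of p, OF pos] by simp
qed

lemma mod_inv_helper:
  assumes "0 < (P::nat)" "x < P"
  shows "((x + (P - m mod P)) mod P + m) mod P = x"
proof -
  have r: "m mod P < P" using assms by simp
  have d: "m div P * P + m mod P = m" by simp
  have "((x + (P - m mod P)) mod P + m) mod P = (x + (P - m mod P) + m) mod P"
    by (simp add: mod_add_left_eq)
  also have "x + (P - m mod P) + m = x + P + m div P * P" using r d by linarith
  also have "(x + P + m div P * P) mod P = x" using assms by simp
  finally show ?thesis .
qed

lemma H_inv_ex:
  assumes pos: "\<And>i. 0 < p (Suc i)" and g: "g \<in> carrier (H p k)"
  shows "\<exists>h \<in> carrier (H p k). h \<circ> g = id"
proof -
  let ?T = "tree_verts p k"
  define h where "h = (\<lambda>v. if v \<in> ?T then inv_into ?T g v else v)"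
  have bg: "bij_betw g ?T ?T" using H_bij[OF g] .
  have ig: "inj_on g ?T" using bij_betw_imp_inj_on[OF bg] .
  have img: "g ` ?T = ?T" using bij_betw_imp_surj_on[OF bg] .
  have hT: "\<And>v. v \<in> ?T \<Longrightarrow> h v \<in> ?T" unfolding h_def using img by (auto intro: inv_into_into)
  have ghv: "\<And>v. v \<in> ?T \<Longrightarrow> g (h v) = v" unfolding h_def using img by (auto intro: f_inv_into_f)
  have hg: "\<And>w. w \<in> ?T \<Longrightarrow> h (g w) = w" unfolding h_def using ig H_tv[OF g] by auto
  have b: "bij_betw h ?T ?T"
    using bij_betw_inv_into[OF bg] by (rule bij_betw_cong[THEN iffD1, rotated]) (simp add: h_def)
  have out: "\<forall>v. v \<notin> ?T \<longrightarrow> h v = v" by (simp add: h_def)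
  have lenh: "\<And>v. v \<in> ?T \<Longrightarrow> length (h v) = length v"
  proof -
    fix v assume v: "v \<in> ?T"
    show "length (h v) = length v" using H_len[OF g hT[OF v]] ghv[OF v] by simp
  qed
  have lp: "\<forall>v \<in> ?T. length (h v) = length v \<and> (\<forall>i \<le> length v. h (take i v) = take i (h v))"
  proof (intro ballI conjI allI impI)
    fix v assume v: "v \<in> ?T"
    show "length (h v) = length v" using lenh v .
    fix i assume i: "i \<le> length v"
    have "g (take i (h v)) = take i (g (h v))" using H_take[OF g hT[OF v]] i lenh[OF v] by simp
    then have "g (take i (h v)) = take i v" using ghv[OF v] by simp
    moreover have "h (g (take i (h v))) = take i (h v)" using hg[OF tv_take[OF hT[OF v]]] .
    ultimately show "h (take i v) = take i (h v)" by simp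
  qed
  have sh: "\<forall>u \<in> ?T. length u < k \<longrightarrow>
        (\<exists>m::nat. \<forall>x < p (Suc (length u)). h (u @ [x]) = h u @ [(x + m) mod p (Suc (length u))])"
  proof (intro ballI impI)
    fix u assume u: "u \<in> ?T" "length u < k"
    let ?P = "p (Suc (length u))"
    define w where "w = h u"
    have w: "w \<in> ?T" "length w = length u" "g w = u" using hT[OF u(1)] lenh[OF u(1)] ghv[OF u(1)] by (auto simp: w_def)
    obtain m where m: "\<forall>z < ?P. g (w @ [z]) = g w @ [(z + m) mod ?P]"
      using H_shift[OF g w(1)] w u by auto
    have "\<forall>x < ?P. h (u @ [x]) = h u @ [(x + (?P - m mod ?P)) mod ?P]"
    proof (intro allI impI)
      fix x assume x: "x < ?P"
      let ?z = "(x + (?P - m mod ?P)) mod ?P"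
      have z: "?z < ?P" using pos[of "length u"] by simp
      have "g (w @ [?z]) = u @ [x]" using m z w mod_inv_helper[OF pos x] by simp
      moreover have "w @ [?z] \<in> ?T" using w z u by (simp add: tv_snoc)
      ultimately have "h (u @ [x]) = w @ [?z]" using hg[of "w @ [?z]"] by simp
      then show "h (u @ [x]) = h u @ [?z]" by (simp add: w_def)
    qed
    then show "\<exists>m::nat. \<forall>x < ?P. h (u @ [x]) = h u @ [(x + m) mod ?P]" by blast
  qed
  have hH: "h \<in> carrier (H p k)" unfolding in_H cyc_aut_def
    apply (intro conjI)
       apply (rule out)
      apply (rule b)
     apply (rule lp)
    apply (rule sh)
    done
  have "h \<circ> g = id"
  proof
    fix v show "(h \<circ> g) v = id v"
    proof (cases "v \<in> ?T")
      case True then show ?thesis using hg by simp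
    next
      case False then show ?thesis using H_out[OF g False] by (simp add: h_def)
    qed
  qed
  then show ?thesis using hH by blast
qed

lemma group_H:
  assumes pos: "\<And>i. 0 < p (Suc i)"
  shows "group (H p k)"
proof (rule groupI)
  show "\<one>\<^bsub>H p k\<^esub> \<in> carrier (H p k)" using id_in_H by simp
next
  fix x y assume "x \<in> carrier (H p k)" "y \<in> carrier (H p k)"
  then show "x \<otimes>\<^bsub>H p k\<^esub> y \<in> carrier (H p k)" using H_closed[of p, OF pos] by simp
next
  fix x y z show "x \<otimes>\<^bsub>H p k\<^esub> y \<otimes>\<^bsub>H p k\<^esub> z = x \<otimes>\<^bsub>H p k\<^esub> (y \<otimes>\<^bsub>H p k\<^esub> z)" by (simp add: o_assoc)
next
  fix x show "\<one>\<^bsub>H p k\<^esub> \<otimes>\<^bsub>H p k\<^esub> x = x" by simp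
next
  fix x assume "x \<in> carrier (H p k)"
  then show "\<exists>y \<in> carrier (H p k). y \<otimes>\<^bsub>H p k\<^esub> x = \<one>\<^bsub>H p k\<^esub>" using H_inv_ex[of p, OF pos] by simp
qed


definition tvi :: "(nat \<Rightarrow> nat) \<Rightarrow> nat list set" where
  "tvi p = {v. \<forall>i<length v. v!i < p (Suc i)}"

definition Phi :: "(nat \<Rightarrow> nat) \<Rightarrow> nat \<Rightarrow> (nat list \<Rightarrow> nat list) \<Rightarrow> nat list \<Rightarrow> nat list" where
  "Phi p k x v = (if v \<in> tvi p then x (take k v) @ drop k v else v)"

definition Emap :: "(nat \<Rightarrow> nat) \<Rightarrow> nat \<Rightarrow> nat \<Rightarrow> (nat list \<Rightarrow> nat list) \<Rightarrow> nat list \<Rightarrow> nat list" where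
  "Emap p k j g v = (if v \<in> tree_verts p j then g (take k v) @ drop k v else v)"

lemma tv_tvi: "v \<in> tree_verts p j \<Longrightarrow> v \<in> tvi p"
  by (simp add: tree_verts_def tvi_def)

lemma tvi_take: "v \<in> tvi p \<Longrightarrow> take k v \<in> tree_verts p k"
  by (auto simp: tree_verts_def tvi_def)

lemma tv_take_k: "v \<in> tree_verts p j \<Longrightarrow> take k v \<in> tree_verts p k"
  by (rule tvi_take[OF tv_tvi])

lemma drop_take_app: "k \<le> J \<Longrightarrow> drop k (take J v) @ drop J v = drop k v"
proof -
  assume "k \<le> J"
  then have "drop k (take J v) @ drop J v = take (J - k) (drop k v) @ drop (J - k) (drop k v)"
    by (simp add: drop_take)
  then show ?thesis by (simp only: append_take_drop_id)
qed

lemma compose_steps_Emap: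
  assumes out: "\<And>v. v \<notin> tree_verts p k \<Longrightarrow> g v = v"
  shows "compose_steps (extend_step p) k n g = Emap p k (k + n) g"
proof (induction n)
  case 0
  show ?case
  proof
    fix v show "compose_steps (extend_step p) k 0 g v = Emap p k (k + 0) g v"
      using out[of v] by (auto simp: Emap_def tree_verts_def)
  qed
next
  case (Suc n)
  show ?case
  proof
    fix v
    show "compose_steps (extend_step p) k (Suc n) g v = Emap p k (k + Suc n) g v"
    proof (cases "v \<in> tree_verts p (Suc (k + n))")
      case True
      have t: "take (k + n) v \<in> tree_verts p (k + n)" using tv_take_k[OF True] .
      have "compose_steps (extend_step p) k (Suc n) g v = extend_step p (k + n) (compose_steps (extend_step p) k n g) v"
        by simp
      also have "\<dots> = extend_step p (k + n) (Emap p k (k + n) g) v" using Suc.IH by simp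
      also have "\<dots> = Emap p k (k + n) g (take (k + n) v) @ drop (k + n) v"
        using True by (simp add: extend_step_def)
      also have "\<dots> = g (take k v) @ drop k (take (k + n) v) @ drop (k + n) v"
        using t by (simp add: Emap_def min_def)
      also have "drop k (take (k + n) v) @ drop (k + n) v = drop k v" by (rule drop_take_app) simp
      finally show ?thesis using True by (simp add: Emap_def)
    next
      case False
      then show ?thesis by (simp add: extend_step_def Emap_def)
    qed
  qed
qed

lemma system_maps_Emap:
  assumes "g \<in> carrier (H p k)" "k \<le> j"
  shows "system_maps (extend_step p) k j g = Emap p k j g"
  using compose_steps_Emap[of p k g "j - k"] H_out[OF assms(1)] assms(2)
  by (simp add: system_maps_def)

lemma Emap_ext_aut:
  assumes pos: "\<And>i. 0 < p (Suc i)" and kj: "k \<le> j"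
  shows "Emap p k j (ext p k (aut p M)) = ext p j (aut p (\<lambda>u. if length u < k then M u else 0))"
proof
  fix v
  show "Emap p k j (ext p k (aut p M)) v = ext p j (aut p (\<lambda>u. if length u < k then M u else 0)) v"
  proof (cases "v \<in> tree_verts p j")
    case False then show ?thesis by (simp add: Emap_def ext_def)
  next
    case True
    have tk: "take k v \<in> tree_verts p k" by (rule tv_take_k[OF True])
    have vi: "\<And>i. i < length v \<Longrightarrow> v ! i < p (Suc i)" using True by (simp add: tree_verts_def)
    have "aut p M (take k v) @ drop k v = aut p (\<lambda>u. if length u < k then M u else 0) v"
    proof (rule nth_equalityI)
      show "length (aut p M (take k v) @ drop k v) = length (aut p (\<lambda>u. if length u < k then M u else 0) v)"
        by simp
    next
      fix i assume "i < length (aut p M (take k v) @ drop k v)"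
      then have i: "i < length v" by simp
      show "(aut p M (take k v) @ drop k v) ! i = aut p (\<lambda>u. if length u < k then M u else 0) v ! i"
      proof (cases "i < k")
        case True
        then show ?thesis using i by (simp add: nth_append aut_nth min_def take_take)
      next
        case False
        have "nat ((int (v ! i) + 0) mod int (p (Suc i))) = v ! i" using vi[OF i] by simp
        then show ?thesis using False i by (simp add: nth_append aut_nth min_def)
      qed
    qed
    then show ?thesis using True tk by (simp add: Emap_def ext_def)
  qed
qed

lemma Emap_in_H:
  assumes pos: "\<And>i. 0 < p (Suc i)" and g: "g \<in> carrier (H p k)" and kj: "k \<le> j"
  shows "Emap p k j g \<in> carrier (H p j)"
proof -
  have "Emap p k j g = ext p j (aut p (\<lambda>u. if length u < k then pm g u else 0))"
    using H_eq_ext[OF pos g] Emap_ext_aut[of p, OF pos kj] by metis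
  then show ?thesis using ext_aut_in_H[of p, OF pos] by simp
qed

lemma tvi_app:
  assumes v: "v \<in> tvi p" and a: "a \<in> tree_verts p k" and la: "length a = length (take k v)"
  shows "a @ drop k v \<in> tvi p" "take k (a @ drop k v) = a" "drop k (a @ drop k v) = drop k v"
proof -
  show "take k (a @ drop k v) = a" using la by (cases "length v \<le> k") (auto simp: min_def)
  show "drop k (a @ drop k v) = drop k v" using la by (cases "length v \<le> k") (auto simp: min_def)
  have "\<forall>i < length (a @ drop k v). (a @ drop k v) ! i < p (Suc i)"
  proof (intro allI impI)
    fix i assume i: "i < length (a @ drop k v)"
    show "(a @ drop k v) ! i < p (Suc i)"
    proof (cases "i < length a")
      case True then show ?thesis using a by (simp add: nth_append tree_verts_def)
    next
      case False
      then have "length a = k" "k \<le> i" using la i by (auto simp: min_def split: if_splits)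
      then show ?thesis using False i v by (simp add: nth_append tvi_def)
    qed
  qed
  then show "a @ drop k v \<in> tvi p" by (simp add: tvi_def)
qed

lemma Phi_comp:
  assumes x: "x \<in> carrier (H p k)" and y: "y \<in> carrier (H p k)"
  shows "Phi p k (x \<circ> y) = Phi p k x \<circ> Phi p k y"
proof
  fix v
  show "Phi p k (x \<circ> y) v = (Phi p k x \<circ> Phi p k y) v"
  proof (cases "v \<in> tvi p")
    case False then show ?thesis by (simp add: Phi_def)
  next
    case True
    have w: "take k v \<in> tree_verts p k" using tvi_take[OF True] .
    have a: "y (take k v) \<in> tree_verts p k" "length (y (take k v)) = length (take k v)"
      using H_tv[OF y w] H_len[OF y w] by auto
    note z = tvi_app[OF True a]
    show ?thesis using True z by (simp add: Phi_def)
  qed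
qed

lemma Phi_Emap:
  assumes kJ: "k \<le> J"
  shows "Phi p J (Emap p k J x) = Phi p k x"
proof
  fix v
  show "Phi p J (Emap p k J x) v = Phi p k x v"
  proof (cases "v \<in> tvi p")
    case False then show ?thesis by (simp add: Phi_def)
  next
    case True
    have "take J v \<in> tree_verts p J" using tvi_take[OF True] .
    then have "Emap p k J x (take J v) @ drop J v = x (take k v) @ (drop k (take J v) @ drop J v)"
      using kJ by (simp add: Emap_def min_def)
    also have "drop k (take J v) @ drop J v = drop k v" using drop_take_app[OF kJ] .
    finally show ?thesis using True by (simp add: Phi_def)
  qed
qed

lemma Phi_id: "Phi p k id = id"
  by (rule ext) (simp add: Phi_def)

lemma Emap_id: "Emap p 0 j id = id"
  by (rule ext) (simp add: Emap_def)


locale posp =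
  fixes p :: "nat \<Rightarrow> nat"
  assumes pos: "\<And>i. 0 < p (Suc i)"
begin

abbreviation "F \<equiv> system_maps (extend_step p)"
abbreviation "R \<equiv> dl_rel (H p) F"
abbreviation "L \<equiv> direct_limit (H p) F"
definition iota :: "nat \<Rightarrow> (nat list \<Rightarrow> nat list) \<Rightarrow> (nat \<times> (nat list \<Rightarrow> nat list)) set" where
  "iota k x = R `` {(k, x)}"

lemma grp: "group (H p k)" using group_H[of p] pos by blast

lemma closed: "x \<in> carrier (H p k) \<Longrightarrow> y \<in> carrier (H p k) \<Longrightarrow> x \<circ> y \<in> carrier (H p k)"
  using H_closed[of p] pos by blast

lemma Emap_H: "x \<in> carrier (H p k) \<Longrightarrow> k \<le> j \<Longrightarrow> Emap p k j x \<in> carrier (H p j)"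
  using Emap_in_H[of p] pos by blast

lemma R_iff: "((k, x), (l, y)) \<in> R \<longleftrightarrow>
   x \<in> carrier (H p k) \<and> y \<in> carrier (H p l) \<and> Phi p k x = Phi p l y"
proof
  assume "((k, x), (l, y)) \<in> R"
  then obtain j where x: "x \<in> carrier (H p k)" and y: "y \<in> carrier (H p l)" and j: "j \<ge> max k l"
    and e: "F k j x = F l j y" by (auto simp: dl_rel_def)
  have "Emap p k j x = Emap p l j y" using e system_maps_Emap[OF x] system_maps_Emap[OF y] j by simp
  then have "Phi p j (Emap p k j x) = Phi p j (Emap p l j y)" by simp
  then have "Phi p k x = Phi p l y" using Phi_Emap[of k j p x] Phi_Emap[of l j p y] j by simp
  then show "x \<in> carrier (H p k) \<and> y \<in> carrier (H p l) \<and> Phi p k x = Phi p l y" using x y by simp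
next
  assume a: "x \<in> carrier (H p k) \<and> y \<in> carrier (H p l) \<and> Phi p k x = Phi p l y"
  let ?j = "max k l"
  have "Emap p k ?j x = Emap p l ?j y"
  proof
    fix v show "Emap p k ?j x v = Emap p l ?j y v"
    proof (cases "v \<in> tree_verts p ?j")
      case True
      then have "v \<in> tvi p" by (rule tv_tvi)
      then have "Phi p k x v = Phi p l y v" using a by simp
      then show ?thesis using True \<open>v \<in> tvi p\<close> by (simp add: Emap_def Phi_def)
    next
      case False then show ?thesis by (simp add: Emap_def)
    qed
  qed
  then have "F k ?j x = F l ?j y" using system_maps_Emap[of x p k ?j] system_maps_Emap[of y p l ?j] a by simp
  then have "\<exists>j \<ge> max k l. F k j x = F l j y" by (intro exI[of _ ?j]) simp
  then show "((k, x), (l, y)) \<in> R" using a unfolding dl_rel_def by blast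
qed

lemma iota_eq: "x \<in> carrier (H p k) \<Longrightarrow> iota k x = {(l, y). y \<in> carrier (H p l) \<and> Phi p l y = Phi p k x}"
  unfolding iota_def using R_iff by auto

lemma iota_eq_iff:
  assumes "x \<in> carrier (H p k)" "y \<in> carrier (H p l)"
  shows "iota k x = iota l y \<longleftrightarrow> Phi p k x = Phi p l y"
proof
  assume e: "iota k x = iota l y"
  have "(l, y) \<in> iota l y" using iota_eq[OF assms(2)] assms(2) by simp
  then have "(l, y) \<in> iota k x" using e by simp
  then show "Phi p k x = Phi p l y" unfolding iota_eq[OF assms(1)] by simp
next
  assume "Phi p k x = Phi p l y"
  then show "iota k x = iota l y" using iota_eq[OF assms(1)] iota_eq[OF assms(2)] by simp
qed

lemma carrier_L: "carrier L = {iota k x | k x. x \<in> carrier (H p k)}"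
  by (auto simp: direct_limit_def quotient_def iota_def)

lemma iota_in: "x \<in> carrier (H p k) \<Longrightarrow> iota k x \<in> carrier L"
  using carrier_L by blast

lemma lift: "x \<in> carrier (H p k) \<Longrightarrow> k \<le> J \<Longrightarrow> iota k x = iota J (Emap p k J x)"
  using iota_eq_iff[of x k "Emap p k J x" J] Emap_H Phi_Emap[of k J p x] by simp

lemma one_L: "\<one>\<^bsub>L\<^esub> = iota J id"
proof -
  have "\<one>\<^bsub>L\<^esub> = iota 0 id" by (simp add: direct_limit_def iota_def)
  also have "\<dots> = iota J id" using iota_eq_iff[of id 0 id J] id_in_H Phi_id by simp
  finally show ?thesis .
qed

lemma mult_iota:
  assumes x: "x \<in> carrier (H p J)" and y: "y \<in> carrier (H p J)"
  shows "iota J x \<otimes>\<^bsub>L\<^esub> iota J y = iota J (x \<circ> y)"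
proof -
  define a where "a = (SOME a. a \<in> iota J x)"
  define b where "b = (SOME b. b \<in> iota J y)"
  have "(J, x) \<in> iota J x" using iota_eq[OF x] x by simp
  then have a: "a \<in> iota J x" unfolding a_def by (rule someI)
  have "(J, y) \<in> iota J y" using iota_eq[OF y] y by simp
  then have b: "b \<in> iota J y" unfolding b_def by (rule someI)
  obtain k x' where ak: "a = (k, x')" by (cases a)
  obtain l y' where bl: "b = (l, y')" by (cases b)
  have x': "x' \<in> carrier (H p k)" "Phi p k x' = Phi p J x" using a ak iota_eq[OF x] by auto
  have y': "y' \<in> carrier (H p l)" "Phi p l y' = Phi p J y" using b bl iota_eq[OF y] by auto
  let ?j = "max k l"
  have ex: "Emap p k ?j x' \<in> carrier (H p ?j)" using Emap_H[OF x'(1)] by simp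
  have ey: "Emap p l ?j y' \<in> carrier (H p ?j)" using Emap_H[OF y'(1)] by simp
  have "iota J x \<otimes>\<^bsub>L\<^esub> iota J y = R `` {(?j, F k ?j x' \<otimes>\<^bsub>H p ?j\<^esub> F l ?j y')}"
    by (simp add: direct_limit_def dl_mult_def Let_def a_def[symmetric] b_def[symmetric] ak bl)
  also have "\<dots> = iota ?j (Emap p k ?j x' \<circ> Emap p l ?j y')"
    using system_maps_Emap[OF x'(1), of ?j] system_maps_Emap[OF y'(1), of ?j] by (simp add: iota_def)
  also have "\<dots> = iota J (x \<circ> y)"
  proof (subst iota_eq_iff)
    show "Emap p k ?j x' \<circ> Emap p l ?j y' \<in> carrier (H p ?j)" using closed[OF ex ey] .
    show "x \<circ> y \<in> carrier (H p J)" using closed[OF x y] .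
    have "Phi p ?j (Emap p k ?j x' \<circ> Emap p l ?j y') = Phi p ?j (Emap p k ?j x') \<circ> Phi p ?j (Emap p l ?j y')"
      by (rule Phi_comp[OF ex ey])
    also have "\<dots> = Phi p k x' \<circ> Phi p l y'" using Phi_Emap[of k ?j p x'] Phi_Emap[of l ?j p y'] by simp
    also have "\<dots> = Phi p J (x \<circ> y)" using x'(2) y'(2) Phi_comp[OF x y] by simp
    finally show "Phi p ?j (Emap p k ?j x' \<circ> Emap p l ?j y') = Phi p J (x \<circ> y)" .
  qed
  finally show ?thesis .
qed

lemma carrier_L_E: "z \<in> carrier L \<Longrightarrow> (\<And>k x. x \<in> carrier (H p k) \<Longrightarrow> z = iota k x \<Longrightarrow> P) \<Longrightarrow> P"
  using carrier_L by blast

lemma common2: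
  assumes "a \<in> carrier L" "b \<in> carrier L"
  obtains J x y where "x \<in> carrier (H p J)" "y \<in> carrier (H p J)" "a = iota J x" "b = iota J y"
proof -
  obtain k x where x: "x \<in> carrier (H p k)" "a = iota k x" using assms(1) carrier_L_E by metis
  obtain l y where y: "y \<in> carrier (H p l)" "b = iota l y" using assms(2) carrier_L_E by metis
  let ?J = "max k l"
  show ?thesis
    using that[of "Emap p k ?J x" ?J "Emap p l ?J y"] Emap_H[OF x(1), of ?J] Emap_H[OF y(1), of ?J]
      lift[OF x(1), of ?J] lift[OF y(1), of ?J] x(2) y(2) by simp
qed

lemma common3:
  assumes "a \<in> carrier L" "b \<in> carrier L" "c \<in> carrier L"
  obtains J x y z where "x \<in> carrier (H p J)" "y \<in> carrier (H p J)" "z \<in> carrier (H p J)"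
    "a = iota J x" "b = iota J y" "c = iota J z"
proof -
  obtain k x where x: "x \<in> carrier (H p k)" "a = iota k x" using assms(1) carrier_L_E by metis
  obtain l y where y: "y \<in> carrier (H p l)" "b = iota l y" using assms(2) carrier_L_E by metis
  obtain m z where z: "z \<in> carrier (H p m)" "c = iota m z" using assms(3) carrier_L_E by metis
  let ?J = "max k (max l m)"
  show ?thesis
    using that[of "Emap p k ?J x" ?J "Emap p l ?J y" "Emap p m ?J z"]
      Emap_H[OF x(1), of ?J] Emap_H[OF y(1), of ?J] Emap_H[OF z(1), of ?J]
      lift[OF x(1), of ?J] lift[OF y(1), of ?J] lift[OF z(1), of ?J] x(2) y(2) z(2) by simp
qed

lemma group_L: "group L"
proof (rule groupI)
  fix a b assume "a \<in> carrier L" "b \<in> carrier L"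
  then obtain J x y where "x \<in> carrier (H p J)" "y \<in> carrier (H p J)" "a = iota J x" "b = iota J y"
    by (rule common2)
  then show "a \<otimes>\<^bsub>L\<^esub> b \<in> carrier L" using mult_iota iota_in closed by simp
next
  show "\<one>\<^bsub>L\<^esub> \<in> carrier L" using one_L[of 0] iota_in id_in_H by simp
next
  fix a b c assume "a \<in> carrier L" "b \<in> carrier L" "c \<in> carrier L"
  then obtain J x y z where "x \<in> carrier (H p J)" "y \<in> carrier (H p J)" "z \<in> carrier (H p J)"
    "a = iota J x" "b = iota J y" "c = iota J z" by (rule common3)
  then show "a \<otimes>\<^bsub>L\<^esub> b \<otimes>\<^bsub>L\<^esub> c = a \<otimes>\<^bsub>L\<^esub> (b \<otimes>\<^bsub>L\<^esub> c)"
    using mult_iota closed by (simp add: o_assoc)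
next
  fix a assume "a \<in> carrier L"
  then obtain k x where x: "x \<in> carrier (H p k)" "a = iota k x" using carrier_L_E by metis
  show "\<one>\<^bsub>L\<^esub> \<otimes>\<^bsub>L\<^esub> a = a" using one_L[of k] mult_iota[OF id_in_H x(1)] x(2) by simp
next
  fix a assume "a \<in> carrier L"
  then obtain k x where x: "x \<in> carrier (H p k)" "a = iota k x" using carrier_L_E by metis
  obtain h where h: "h \<in> carrier (H p k)" "h \<circ> x = id" using H_inv_ex[of p, OF pos x(1)] by blast
  have "iota k h \<otimes>\<^bsub>L\<^esub> a = \<one>\<^bsub>L\<^esub>" using mult_iota[OF h(1) x(1)] h(2) x(2) one_L[of k] by simp
  then show "\<exists>y\<in>carrier L. y \<otimes>\<^bsub>L\<^esub> a = \<one>\<^bsub>L\<^esub>" using iota_in[OF h(1)] by blast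
qed

lemma inv_iota:
  assumes x: "x \<in> carrier (H p k)"
  shows "inv\<^bsub>L\<^esub> (iota k x) = iota k (inv\<^bsub>H p k\<^esub> x)"
proof -
  interpret G: group "H p k" by (rule grp)
  have i: "inv\<^bsub>H p k\<^esub> x \<in> carrier (H p k)" using x by simp
  have "inv\<^bsub>H p k\<^esub> x \<circ> x = id" using G.l_inv[OF x] by simp
  then have "iota k (inv\<^bsub>H p k\<^esub> x) \<otimes>\<^bsub>L\<^esub> iota k x = \<one>\<^bsub>L\<^esub>" using mult_iota[OF i x] one_L[of k] by simp
  then show ?thesis using group.inv_equality[OF group_L] iota_in[OF x] iota_in[OF i] by blast
qed

lemma comm_iota:
  assumes a: "a \<in> carrier (H p k)" and b: "b \<in> carrier (H p k)"
  shows "commutator L (iota k a) (iota k b) = iota k (a \<circ> b \<circ> inv\<^bsub>H p k\<^esub> a \<circ> inv\<^bsub>H p k\<^esub> b)"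
proof -
  interpret G: group "H p k" by (rule grp)
  have ia: "inv\<^bsub>H p k\<^esub> a \<in> carrier (H p k)" and ib: "inv\<^bsub>H p k\<^esub> b \<in> carrier (H p k)" using a b by auto
  show ?thesis unfolding commutator_def inv_iota[OF a] inv_iota[OF b]
    using a b ia ib by (simp add: mult_iota closed)
qed

end


definition lev :: "(nat \<Rightarrow> nat) \<Rightarrow> nat \<Rightarrow> nat list set" where
  "lev p n = {u. u \<in> tree_verts p n \<and> length u = n}"

definition Nn :: "(nat \<Rightarrow> nat) \<Rightarrow> nat \<Rightarrow> nat" where
  "Nn p n = (\<Prod>l<n. p (Suc l))"

definition enc :: "(nat \<Rightarrow> nat) \<Rightarrow> nat list \<Rightarrow> nat" where
  "enc p u = (\<Sum>j<length u. u!j * Nn p j)"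

definition mb :: "(nat \<Rightarrow> nat) \<Rightarrow> nat list \<Rightarrow> int" where
  "mb p u = (if enc p u = Nn p (length u) - 1 then 1 else 0)"

definition lsum :: "(nat \<Rightarrow> nat) \<Rightarrow> (nat list \<Rightarrow> int) \<Rightarrow> nat \<Rightarrow> int" where
  "lsum p M n = (\<Sum>u\<in>lev p n. M u)"

definition sig :: "(nat \<Rightarrow> nat) \<Rightarrow> nat \<Rightarrow> (nat list \<Rightarrow> nat list) \<Rightarrow> int" where
  "sig p n g = lsum p (pm g) n mod int (p (Suc n))"

definition Dk :: "(nat \<Rightarrow> nat) \<Rightarrow> nat \<Rightarrow> (nat list \<Rightarrow> nat list) \<Rightarrow> bool" where
  "Dk p k g \<longleftrightarrow> (\<forall>n<k. sig p n g = 0)"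

lemma lev_0: "lev p 0 = {[]}"
  by (auto simp: lev_def tree_verts_def)

lemma lev_snoc: "u @ [x] \<in> lev p (Suc n) \<longleftrightarrow> u \<in> lev p n \<and> x < p (Suc n)"
proof
  assume a: "u @ [x] \<in> lev p (Suc n)"
  then have l: "length u = n" by (simp add: lev_def)
  have "\<forall>i<length (u @ [x]). (u @ [x]) ! i < p (Suc i)" using a by (simp add: lev_def tree_verts_def)
  then have h: "\<And>i. i < Suc n \<Longrightarrow> (u @ [x]) ! i < p (Suc i)" using l by simp
  have "\<forall>i<n. u ! i < p (Suc i)"
  proof (intro allI impI)
    fix i assume "i < n"
    then show "u ! i < p (Suc i)" using h[of i] l by (simp add: nth_append)
  qed
  moreover have "x < p (Suc n)" using h[of n] l[symmetric] by simp
  ultimately have "\<forall>i<n. u ! i < p (Suc i)" "x < p (Suc n)" by auto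
  then show "u \<in> lev p n \<and> x < p (Suc n)" using l by (simp add: lev_def tree_verts_def)
next
  assume a: "u \<in> lev p n \<and> x < p (Suc n)"
  then have l: "length u = n" by (simp add: lev_def)
  have "\<forall>i<length (u @ [x]). (u @ [x]) ! i < p (Suc i)"
  proof (intro allI impI)
    fix i assume "i < length (u @ [x])"
    then have "i < n \<or> i = n" using l by auto
    then show "(u @ [x]) ! i < p (Suc i)" using a l by (auto simp: nth_append lev_def tree_verts_def)
  qed
  then show "u @ [x] \<in> lev p (Suc n)" using l by (simp add: lev_def tree_verts_def)
qed

lemma lev_SucE:
  assumes "v \<in> lev p (Suc n)"
  obtains u x where "v = u @ [x]" "u \<in> lev p n" "x < p (Suc n)"
proof -
  have "v \<noteq> []" using assms by (auto simp: lev_def)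
  then obtain u x where "v = u @ [x]" by (metis rev_exhaust)
  then show ?thesis using that assms lev_snoc by blast
qed

lemma lev_tv: "u \<in> lev p n \<Longrightarrow> n \<le> k \<Longrightarrow> u \<in> tree_verts p k"
  by (auto simp: lev_def tree_verts_def)

lemma lev_len: "u \<in> lev p n \<Longrightarrow> length u = n"
  by (simp add: lev_def)

lemma finite_lev: "finite (lev p n)"
  using finite_tv[of p n] by (rule finite_subset[rotated]) (auto simp: lev_def)

lemma Nn_Suc: "Nn p (Suc n) = Nn p n * p (Suc n)"
  by (simp add: Nn_def)

lemma enc_snoc: "enc p (u @ [x]) = enc p u + x * Nn p (length u)"
proof -
  have "enc p (u @ [x]) = (\<Sum>j<length u. (u @ [x])!j * Nn p j) + x * Nn p (length u)"
    by (simp add: enc_def)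
  also have "(\<Sum>j<length u. (u @ [x])!j * Nn p j) = enc p u"
    unfolding enc_def by (rule sum.cong) (auto simp: nth_append)
  finally show ?thesis .
qed

lemma enc_Nil[simp]: "enc p [] = 0" by (simp add: enc_def)

context posp
begin

lemma Nn_pos: "0 < Nn p n"
  using pos by (simp add: Nn_def)

lemma enc_lt: "u \<in> lev p n \<Longrightarrow> enc p u < Nn p n"
proof (induction n arbitrary: u)
  case 0 then show ?case by (simp add: lev_0 Nn_def)
next
  case (Suc n)
  obtain w x where w: "u = w @ [x]" "w \<in> lev p n" "x < p (Suc n)" using Suc.prems by (rule lev_SucE)
  have "enc p w < Nn p n" using Suc.IH[OF w(2)] .
  then have "enc p u < Nn p n + x * Nn p n" using w lev_len by (simp add: enc_snoc)
  also have "\<dots> = (x + 1) * Nn p n" by simp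
  also have "\<dots> \<le> p (Suc n) * Nn p n" using w(3) by (intro mult_le_mono1) simp
  finally show ?case by (simp add: Nn_Suc mult.commute)
qed

lemma enc_inj: "inj_on (enc p) (lev p n)"
proof (induction n)
  case 0 then show ?case by (simp add: lev_0)
next
  case (Suc n)
  show ?case
  proof
    fix v v' assume v: "v \<in> lev p (Suc n)" and v': "v' \<in> lev p (Suc n)" and e: "enc p v = enc p v'"
    obtain w x where w: "v = w @ [x]" "w \<in> lev p n" "x < p (Suc n)" using v by (rule lev_SucE)
    obtain w' x' where w': "v' = w' @ [x']" "w' \<in> lev p n" "x' < p (Suc n)" using v' by (rule lev_SucE)
    have e2: "enc p w + x * Nn p n = enc p w' + x' * Nn p n"
      using e w w' lev_len by (simp add: enc_snoc)
    have l1: "enc p w < Nn p n" "enc p w' < Nn p n" using enc_lt w(2) w'(2) by auto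
    have "(enc p w + x * Nn p n) mod Nn p n = (enc p w' + x' * Nn p n) mod Nn p n" using e2 by simp
    then have "enc p w = enc p w'" using l1 by simp
    moreover have "(enc p w + x * Nn p n) div Nn p n = (enc p w' + x' * Nn p n) div Nn p n" using e2 by simp
    then have "x = x'" using l1 Nn_pos[of n] by simp
    ultimately show "v = v'" using Suc.IH w w' by (auto dest: inj_onD)
  qed
qed

lemma enc_img: "enc p ` lev p n = {..<Nn p n}"
proof (induction n)
  case 0 then show ?case by (auto simp: lev_0 Nn_def)
next
  case (Suc n)
  show ?case
  proof
    show "enc p ` lev p (Suc n) \<subseteq> {..<Nn p (Suc n)}" using enc_lt by auto
  next
    show "{..<Nn p (Suc n)} \<subseteq> enc p ` lev p (Suc n)"
    proof
      fix t assume "t \<in> {..<Nn p (Suc n)}"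
      then have t: "t < p (Suc n) * Nn p n" by (simp add: Nn_Suc mult.commute)
      have "t mod Nn p n \<in> {..<Nn p n}" using Nn_pos[of n] by simp
      then obtain w where w: "w \<in> lev p n" "enc p w = t mod Nn p n" using Suc.IH by (metis imageE)
      have q: "t div Nn p n < p (Suc n)" using t by (rule less_mult_imp_div_less)
      have "w @ [t div Nn p n] \<in> lev p (Suc n)" using w q lev_snoc by blast
      moreover have "enc p (w @ [t div Nn p n]) = t" using w lev_len[OF w(1)] by (simp add: enc_snoc mod_div_mult_eq)
      ultimately show "t \<in> enc p ` lev p (Suc n)" by (metis image_eqI)
    qed
  qed
qed

lemma enc_bij: "bij_betw (enc p) (lev p n) {..<Nn p n}"
  using enc_inj enc_img by (simp add: bij_betw_def)

lemma aut_lev: "u \<in> lev p n \<Longrightarrow> aut p M u \<in> lev p n"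
  using aut_tv[of p, OF pos] by (simp add: lev_def)

lemma aut_lev_bij: "bij_betw (aut p M) (lev p n) (lev p n)"
proof -
  have i: "inj_on (aut p M) (lev p n)"
    using aut_inj[of p M n, OF pos] by (rule inj_on_subset) (auto simp: lev_def)
  have "aut p M ` lev p n \<subseteq> lev p n" using aut_lev by blast
  then have "aut p M ` lev p n = lev p n" using endo_inj_surj[OF finite_lev _ i] by blast
  then show ?thesis using i by (simp add: bij_betw_def)
qed

lemma odometer: "u \<in> lev p n \<Longrightarrow> enc p (aut p (mb p) u) = (enc p u + 1) mod Nn p n"
proof (induction n arbitrary: u)
  case 0 then show ?case by (simp add: lev_0 Nn_def aut_def)
next
  case (Suc n)
  obtain w x where w: "u = w @ [x]" "w \<in> lev p n" "x < p (Suc n)" using Suc.prems by (rule lev_SucE)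
  let ?N = "Nn p n" and ?P = "p (Suc n)"
  have lw: "length w = n" using lev_len[OF w(2)] .
  have IH: "enc p (aut p (mb p) w) = (enc p w + 1) mod ?N" using Suc.IH[OF w(2)] .
  have lt: "enc p w < ?N" using enc_lt[OF w(2)] .
  have Npos: "0 < ?N" using Nn_pos .
  have Ppos: "0 < ?P" using pos .
  have A: "enc p (aut p (mb p) u) = (enc p w + 1) mod ?N + nat ((int x + mb p w) mod int ?P) * ?N"
    using w(1) lw IH by (simp add: aut_snoc enc_snoc)
  have B: "(enc p u + 1) mod Nn p (Suc n) = (enc p w + x * ?N + 1) mod (?P * ?N)"
    using w(1) lw by (simp add: enc_snoc Nn_Suc mult.commute)
  show ?case
  proof (cases "enc p w = ?N - 1")
    case True
    have m: "mb p w = 1" using True lw by (simp add: mb_def)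
    have "nat ((int x + 1) mod int ?P) = (x + 1) mod ?P"
      using nat_mod_helper[OF Ppos, of x 1] by simp
    then have "enc p (aut p (mb p) u) = ((x + 1) mod ?P) * ?N"
      using A m True Npos by simp
    also have "\<dots> = ((x + 1) * ?N) mod (?P * ?N)" by (simp only: mod_mult_mult2)
    also have "(x + 1) * ?N = enc p w + x * ?N + 1" using True Npos by (simp add: algebra_simps)
    finally show ?thesis using B by (simp only:)
  next
    case False
    have lt2: "enc p w + 1 < ?N" using False lt by linarith
    have m: "mb p w = 0" using False lw by (simp add: mb_def)
    have "nat ((int x + 0) mod int ?P) = x" using w(3) by simp
    then have "enc p (aut p (mb p) u) = enc p w + 1 + x * ?N"
      using A m lt2 by simp
    moreover have "enc p w + x * ?N + 1 < ?P * ?N"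
    proof -
      have "enc p w + x * ?N + 1 < ?N + x * ?N" using lt2 by simp
      also have "\<dots> = (x + 1) * ?N" by simp
      also have "\<dots> \<le> ?P * ?N" using w(3) by (intro mult_le_mono1) simp
      finally show ?thesis .
    qed
    ultimately show ?thesis using B by simp
  qed
qed

lemma sum_mb: "(\<Sum>u\<in>lev p n. mb p u) = 1"
proof -
  have "(\<Sum>u\<in>lev p n. mb p u) = (\<Sum>u\<in>lev p n. (\<lambda>t. if t = Nn p n - 1 then (1::int) else 0) (enc p u))"
    by (rule sum.cong) (auto simp: mb_def lev_len)
  also have "\<dots> = (\<Sum>t\<in>{..<Nn p n}. if t = Nn p n - 1 then (1::int) else 0)"
    by (rule sum.reindex_bij_betw[OF enc_bij])
  also have "\<dots> = 1" using Nn_pos[of n] by simp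
  finally show ?thesis .
qed

lemma lsum_aut: "(\<Sum>u\<in>lev p n. M (aut p M' u)) = lsum p M n"
  unfolding lsum_def by (rule sum.reindex_bij_betw[OF aut_lev_bij])

lemma sig_ext:
  assumes "n < k"
  shows "sig p n (ext p k (aut p M)) = lsum p M n mod int (p (Suc n))"
proof -
  have "lsum p (pm (ext p k (aut p M))) n = (\<Sum>u\<in>lev p n. M u mod int (p (Suc n)))"
    unfolding lsum_def
    by (rule sum.cong) (use assms in \<open>auto simp: pm_ext_aut[of p, OF pos] lev_tv lev_len\<close>)
  then show ?thesis by (simp add: sig_def lsum_def mod_sum_eq)
qed

lemma H_eqE: "g \<in> carrier (H p k) \<Longrightarrow> g = ext p k (aut p (pm g))"
  using H_eq_ext[of p, OF pos] by blast

lemma sig_comp: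
  assumes g: "g \<in> carrier (H p k)" and h: "h \<in> carrier (H p k)" and n: "n < k"
  shows "sig p n (g \<circ> h) = (sig p n g + sig p n h) mod int (p (Suc n))"
proof -
  have "g \<circ> h = ext p k (aut p (pm g)) \<circ> ext p k (aut p (pm h))"
    using arg_cong2[where f="(\<circ>)", OF H_eqE[OF g] H_eqE[OF h]] .
  also have "\<dots> = ext p k (aut p (\<lambda>u. pm h u + pm g (aut p (pm h) u)))"
    by (rule ext_aut_comp[of p, OF pos])
  finally have e: "g \<circ> h = ext p k (aut p (\<lambda>u. pm h u + pm g (aut p (pm h) u)))" .
  have "lsum p (\<lambda>u. pm h u + pm g (aut p (pm h) u)) n = lsum p (pm h) n + lsum p (pm g) n"
    using lsum_aut[of "pm g" "pm h" n] by (simp add: lsum_def sum.distrib)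
  then have "sig p n (g \<circ> h) = (lsum p (pm h) n + lsum p (pm g) n) mod int (p (Suc n))"
    using e sig_ext[OF n] by simp
  then show ?thesis by (simp add: sig_def mod_add_eq add.commute)
qed

lemma sig_id: "sig p n id = 0"
  by (simp add: sig_def lsum_def pm_def)

lemma sig_inv:
  assumes g: "g \<in> carrier (H p k)" and n: "n < k"
  shows "sig p n (inv\<^bsub>H p k\<^esub> g) = (- sig p n g) mod int (p (Suc n))"
proof -
  interpret G: group "H p k" by (rule grp)
  have i: "inv\<^bsub>H p k\<^esub> g \<in> carrier (H p k)" using g by simp
  have "inv\<^bsub>H p k\<^esub> g \<circ> g = id" using G.l_inv[OF g] by simp
  then have "(sig p n (inv\<^bsub>H p k\<^esub> g) + sig p n g) mod int (p (Suc n)) = 0"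
    using sig_comp[OF i g n] sig_id by simp
  then have "(- sig p n g) mod int (p (Suc n)) = ((sig p n (inv\<^bsub>H p k\<^esub> g) + sig p n g) mod int (p (Suc n)) + - sig p n g) mod int (p (Suc n))"
    by simp
  also have "\<dots> = (sig p n (inv\<^bsub>H p k\<^esub> g) + sig p n g + - sig p n g) mod int (p (Suc n))"
    by (rule mod_add_left_eq)
  also have "\<dots> = sig p n (inv\<^bsub>H p k\<^esub> g) mod int (p (Suc n))" by simp
  also have "\<dots> = sig p n (inv\<^bsub>H p k\<^esub> g)" by (simp add: sig_def)
  finally show ?thesis by simp
qed

lemma D_comp: "g \<in> carrier (H p k) \<Longrightarrow> h \<in> carrier (H p k) \<Longrightarrow> Dk p k g \<Longrightarrow> Dk p k h \<Longrightarrow> Dk p k (g \<circ> h)"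
  by (simp add: Dk_def sig_comp)

lemma D_inv: "g \<in> carrier (H p k) \<Longrightarrow> Dk p k g \<Longrightarrow> Dk p k (inv\<^bsub>H p k\<^esub> g)"
  by (simp add: Dk_def sig_inv)

lemma D_id: "Dk p k id"
  by (simp add: Dk_def sig_id)

lemma D_comm:
  assumes a: "a \<in> carrier (H p k)" and b: "b \<in> carrier (H p k)"
  shows "Dk p k (a \<circ> b \<circ> inv\<^bsub>H p k\<^esub> a \<circ> inv\<^bsub>H p k\<^esub> b)"
proof -
  interpret G: group "H p k" by (rule grp)
  have ia: "inv\<^bsub>H p k\<^esub> a \<in> carrier (H p k)" and ib: "inv\<^bsub>H p k\<^esub> b \<in> carrier (H p k)" using a b by auto
  show ?thesis unfolding Dk_def
  proof (intro allI impI)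
    fix n assume n: "n < k"
    let ?P = "int (p (Suc n))"
    have "sig p n (a \<circ> b \<circ> inv\<^bsub>H p k\<^esub> a \<circ> inv\<^bsub>H p k\<^esub> b) =
      (((sig p n a + sig p n b) mod ?P + (- sig p n a) mod ?P) mod ?P + (- sig p n b) mod ?P) mod ?P"
      using sig_comp[OF closed[OF closed[OF a b] ia] ib n] sig_comp[OF closed[OF a b] ia n]
        sig_comp[OF a b n] sig_inv[OF a n] sig_inv[OF b n] by simp
    also have "\<dots> = 0" by (simp add: mod_add_eq)
    finally show "sig p n (a \<circ> b \<circ> inv\<^bsub>H p k\<^esub> a \<circ> inv\<^bsub>H p k\<^esub> b) = 0" .
  qed
qed

lemma D_Emap:
  assumes g: "g \<in> carrier (H p k)" and D: "Dk p k g" and kJ: "k \<le> J"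
  shows "Dk p J (Emap p k J g)"
proof -
  have e: "Emap p k J g = ext p J (aut p (\<lambda>u. if length u < k then pm g u else 0))"
    using arg_cong[where f="Emap p k J", OF H_eqE[OF g]] Emap_ext_aut[of p, OF pos kJ] by simp
  show ?thesis unfolding Dk_def
  proof (intro allI impI)
    fix n assume n: "n < J"
    have s: "sig p n (Emap p k J g) = lsum p (\<lambda>u. if length u < k then pm g u else 0) n mod int (p (Suc n))"
      using e sig_ext[OF n] by simp
    show "sig p n (Emap p k J g) = 0"
    proof (cases "n < k")
      case True
      have "lsum p (\<lambda>u. if length u < k then pm g u else 0) n = lsum p (pm g) n"
        unfolding lsum_def by (rule sum.cong) (use True in \<open>auto simp: lev_len\<close>)
      then show ?thesis using s D True by (simp add: Dk_def sig_def)
    next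
      case False
      have "lsum p (\<lambda>u. if length u < k then pm g u else 0) n = 0"
        unfolding lsum_def by (rule sum.neutral) (use False in \<open>auto simp: lev_len\<close>)
      then show ?thesis using s by simp
    qed
  qed
qed

end


definition dec :: "(nat \<Rightarrow> nat) \<Rightarrow> nat \<Rightarrow> nat \<Rightarrow> nat list" where
  "dec p n t = inv_into (lev p n) (enc p) t"

fun PM :: "(nat \<Rightarrow> nat) \<Rightarrow> (nat list \<Rightarrow> int) \<Rightarrow> nat \<Rightarrow> nat list \<Rightarrow> int" where
  "PM p C 0 = (\<lambda>u. 0)"
| "PM p C (Suc n) = (\<lambda>u. if length u = n
      then (\<Sum>t<enc p u. C (aut p (PM p C n) (dec p n t)) - mb p (dec p n t))
      else PM p C n u)"

lemma PM_stable: "length w < n \<Longrightarrow> n \<le> m \<Longrightarrow> PM p C m w = PM p C n w"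
proof (induction m)
  case 0 then show ?case by simp
next
  case (Suc m)
  show ?case
  proof (cases "n = Suc m")
    case True then show ?thesis by simp
  next
    case False
    then have nm: "n \<le> m" using Suc.prems by simp
    then have "length w \<noteq> m" using Suc.prems by simp
    then have "PM p C (Suc m) w = PM p C m w" by simp
    also have "\<dots> = PM p C n w" using Suc.IH[OF Suc.prems(1) nm] .
    finally show ?thesis .
  qed
qed

lemma aut_cong: "(\<And>i. i < length w \<Longrightarrow> M (take i w) = M' (take i w)) \<Longrightarrow> aut p M w = aut p M' w"
  unfolding aut_def by (rule map_cong) auto

lemma aut_PM: "length w \<le> n \<Longrightarrow> n \<le> m \<Longrightarrow> aut p (PM p C m) w = aut p (PM p C n) w"
proof (rule aut_cong)
  fix i assume "length w \<le> n" "n \<le> m" "i < length w"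
  then show "PM p C m (take i w) = PM p C n (take i w)" by (intro PM_stable) auto
qed

context posp
begin

theorem main:
  assumes g: "g \<in> carrier (H p k)" and D: "Dk p k g"
  shows "\<exists>a\<in>carrier (H p k). \<exists>b\<in>carrier (H p k).
           g = a \<circ> b \<circ> inv\<^bsub>H p k\<^esub> a \<circ> inv\<^bsub>H p k\<^esub> b"
proof -
  interpret G: group "H p k" by (rule grp)
  define Gm where "Gm = pm g"
  have hg: "g = ext p k (aut p Gm)" unfolding Gm_def by (rule H_eqE[OF g])
  define C where "C u = mb p u + Gm (aut p (mb p) u)" for u
  define b where "b = ext p k (aut p (mb p))"
  have bH: "b \<in> carrier (H p k)" unfolding b_def using ext_aut_in_H[of p, OF pos] by blast
  have gb: "g \<circ> b = ext p k (aut p C)"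
    using arg_cong2[where f="(\<circ>)", OF hg b_def] ext_aut_comp[of p, OF pos, of k Gm "mb p"]
    by (simp add: C_def[abs_def])
  define ma where "ma = PM p C k"
  define a where "a = ext p k (aut p ma)"
  have aH: "a \<in> carrier (H p k)" unfolding a_def using ext_aut_in_H[of p, OF pos] by blast
  have key: "ext p k (aut p C) \<circ> a = a \<circ> b"
  proof -
    have l: "ext p k (aut p C) \<circ> a = ext p k (aut p (\<lambda>u. ma u + C (aut p ma u)))"
      unfolding a_def by (rule ext_aut_comp[of p, OF pos])
    have r: "a \<circ> b = ext p k (aut p (\<lambda>u. mb p u + ma (aut p (mb p) u)))"
      unfolding a_def b_def by (rule ext_aut_comp[of p, OF pos])
    have "ext p k (aut p (\<lambda>u. ma u + C (aut p ma u))) = ext p k (aut p (\<lambda>u. mb p u + ma (aut p (mb p) u)))"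
    proof (rule ext_aut_cong)
      fix u assume uk: "u \<in> tree_verts p k" "length u < k"
      define n where "n = length u"
      let ?P = "int (p (Suc n))" and ?N = "Nn p n"
      have u: "u \<in> lev p n" using uk by (auto simp: lev_def n_def tree_verts_def)
      have nk: "n < k" using uk n_def by simp
      define r where "r w = C (aut p (PM p C n) w) - mb p w" for w
      define S where "S t = (\<Sum>s<t. r (dec p n s))" for t
      have PMs: "\<And>w. length w = n \<Longrightarrow> PM p C (Suc n) w = S (enc p w)"
        by (simp add: S_def r_def)
      have mau: "ma u = S (enc p u)"
        unfolding ma_def using PM_stable[of u "Suc n" k p C] nk PMs n_def by simp
      have autma: "aut p ma u = aut p (PM p C n) u"
        unfolding ma_def using aut_PM[of u n k p C] nk n_def by simp
      have ub: "aut p (mb p) u \<in> lev p n" using aut_lev[OF u] .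
      have maub: "ma (aut p (mb p) u) = S (enc p (aut p (mb p) u))"
        unfolding ma_def using PM_stable[of "aut p (mb p) u" "Suc n" k p C] nk PMs lev_len[OF ub] by simp
      have od: "enc p (aut p (mb p) u) = (enc p u + 1) mod ?N" using odometer[OF u] .
      have du: "dec p n (enc p u) = u" unfolding dec_def by (rule inv_into_f_f[OF enc_inj u])
      have Cu: "C (aut p (PM p C n) u) = r u + mb p u" by (simp add: r_def)
      have lt: "enc p u < ?N" using enc_lt[OF u] .
      show "(ma u + C (aut p ma u)) mod int (p (Suc (length u))) =
            (mb p u + ma (aut p (mb p) u)) mod int (p (Suc (length u)))"
      proof (cases "enc p u + 1 < ?N")
        case True
        have "S (enc p u + 1) = S (enc p u) + r u" using du by (simp add: S_def)
        then show ?thesis using mau autma maub od Cu True n_def by (simp add: ac_simps)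
      next
        case False
        then have eN: "enc p u + 1 = ?N" using lt by simp
        have SN: "S (enc p u) + r u = S ?N" using du eN[symmetric] by (simp add: S_def)
        have "S ?N = (\<Sum>w\<in>lev p n. r w)"
        proof -
          have bd: "bij_betw (dec p n) {..<?N} (lev p n)"
            unfolding dec_def using bij_betw_inv_into[OF enc_bij] .
          show ?thesis unfolding S_def by (rule sum.reindex_bij_betw[OF bd])
        qed
        also have "\<dots> = (\<Sum>w\<in>lev p n. C (aut p (PM p C n) w)) - (\<Sum>w\<in>lev p n. mb p w)"
          by (simp add: r_def sum_subtractf)
        also have "\<dots> = lsum p C n - 1" using lsum_aut sum_mb by simp
        also have "lsum p C n = 1 + lsum p Gm n"
          using lsum_aut[of Gm "mb p" n] sum_mb[of n] by (simp add: lsum_def C_def sum.distrib)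
        finally have SNv: "S ?N = lsum p Gm n" by simp
        have z: "lsum p Gm n mod ?P = 0" using D nk by (simp add: Dk_def sig_def Gm_def)
        have "(ma u + C (aut p ma u)) mod ?P = (lsum p Gm n + mb p u) mod ?P"
          using mau autma Cu SN SNv by (simp add: add.assoc[symmetric])
        also have "\<dots> = (lsum p Gm n mod ?P + mb p u) mod ?P" by (simp add: mod_add_left_eq)
        also have "\<dots> = (mb p u + ma (aut p (mb p) u)) mod ?P"
          using z maub od eN by (simp add: S_def)
        finally show ?thesis using n_def by simp
      qed
    qed
    then show ?thesis using l r by simp
  qed
  have gba: "g \<circ> b \<circ> a = a \<circ> b" using gb key by simp
  have ia: "inv\<^bsub>H p k\<^esub> a \<in> carrier (H p k)" and ib: "inv\<^bsub>H p k\<^esub> b \<in> carrier (H p k)"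
    using aH bH by auto
  have ra: "a \<circ> inv\<^bsub>H p k\<^esub> a = id" using G.r_inv[OF aH] by simp
  have rb: "b \<circ> inv\<^bsub>H p k\<^esub> b = id" using G.r_inv[OF bH] by simp
  have "a \<circ> b \<circ> inv\<^bsub>H p k\<^esub> a \<circ> inv\<^bsub>H p k\<^esub> b = g \<circ> b \<circ> (a \<circ> inv\<^bsub>H p k\<^esub> a) \<circ> inv\<^bsub>H p k\<^esub> b"
    using gba by (simp add: o_assoc)
  also have "\<dots> = g \<circ> b \<circ> inv\<^bsub>H p k\<^esub> b" using ra by simp
  also have "\<dots> = g" by (simp only: o_assoc[symmetric] rb comp_id)
  finally show ?thesis using aH bH by metis
qed

end


context posp
begin

definition DL :: "(nat \<times> (nat list \<Rightarrow> nat list)) set set" where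
  "DL = {iota k g | k g. g \<in> carrier (H p k) \<and> Dk p k g}"

lemma comm_in_H:
  assumes a: "a \<in> carrier (H p k)" and b: "b \<in> carrier (H p k)"
  shows "a \<circ> b \<circ> inv\<^bsub>H p k\<^esub> a \<circ> inv\<^bsub>H p k\<^esub> b \<in> carrier (H p k)"
proof -
  interpret G: group "H p k" by (rule grp)
  show ?thesis using a b closed by simp
qed

lemma derived_sub: "derived L (carrier L) \<subseteq> DL"
proof
  fix x assume "x \<in> derived L (carrier L)"
  then show "x \<in> DL" unfolding derived_def
  proof (induction rule: generate.induct)
    case one
    show ?case using one_L[of 0] id_in_H D_id unfolding DL_def by blast
  next
    case (incl h)
    then obtain h1 h2 where h: "h1 \<in> carrier L" "h2 \<in> carrier L"
      "h = h1 \<otimes>\<^bsub>L\<^esub> h2 \<otimes>\<^bsub>L\<^esub> inv\<^bsub>L\<^esub> h1 \<otimes>\<^bsub>L\<^esub> inv\<^bsub>L\<^esub> h2" by blast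
    obtain J x y where xy: "x \<in> carrier (H p J)" "y \<in> carrier (H p J)" "h1 = iota J x" "h2 = iota J y"
      using common2[OF h(1) h(2)] by metis
    have "h = commutator L (iota J x) (iota J y)" using h xy by (simp add: commutator_def)
    also have "\<dots> = iota J (x \<circ> y \<circ> inv\<^bsub>H p J\<^esub> x \<circ> inv\<^bsub>H p J\<^esub> y)" by (rule comm_iota[OF xy(1,2)])
    finally show ?case using comm_in_H[OF xy(1,2)] D_comm[OF xy(1,2)] unfolding DL_def by blast
  next
    case (inv h)
    then obtain h1 h2 where h: "h1 \<in> carrier L" "h2 \<in> carrier L"
      "h = h1 \<otimes>\<^bsub>L\<^esub> h2 \<otimes>\<^bsub>L\<^esub> inv\<^bsub>L\<^esub> h1 \<otimes>\<^bsub>L\<^esub> inv\<^bsub>L\<^esub> h2" by blast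
    obtain J x y where xy: "x \<in> carrier (H p J)" "y \<in> carrier (H p J)" "h1 = iota J x" "h2 = iota J y"
      using common2[OF h(1) h(2)] by metis
    let ?c = "x \<circ> y \<circ> inv\<^bsub>H p J\<^esub> x \<circ> inv\<^bsub>H p J\<^esub> y"
    have c: "?c \<in> carrier (H p J)" using comm_in_H[OF xy(1,2)] .
    have "h = commutator L (iota J x) (iota J y)" using h xy by (simp add: commutator_def)
    also have "\<dots> = iota J ?c" by (rule comm_iota[OF xy(1,2)])
    finally have "inv\<^bsub>L\<^esub> h = iota J (inv\<^bsub>H p J\<^esub> ?c)" using inv_iota[OF c] by simp
    moreover have "inv\<^bsub>H p J\<^esub> ?c \<in> carrier (H p J)"
    proof -
      interpret G: group "H p J" by (rule grp)
      show ?thesis using c by simp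
    qed
    moreover have "Dk p J (inv\<^bsub>H p J\<^esub> ?c)" using D_inv[OF c D_comm[OF xy(1,2)]] .
    ultimately show ?case unfolding DL_def by blast
  next
    case (eng h1 h2)
    obtain k x where x: "x \<in> carrier (H p k)" "Dk p k x" "h1 = iota k x" using eng.IH(1) unfolding DL_def by blast
    obtain l y where y: "y \<in> carrier (H p l)" "Dk p l y" "h2 = iota l y" using eng.IH(2) unfolding DL_def by blast
    let ?J = "max k l"
    have ex: "Emap p k ?J x \<in> carrier (H p ?J)" "Dk p ?J (Emap p k ?J x)"
      using Emap_H[OF x(1)] D_Emap[OF x(1) x(2)] by auto
    have ey: "Emap p l ?J y \<in> carrier (H p ?J)" "Dk p ?J (Emap p l ?J y)"
      using Emap_H[OF y(1)] D_Emap[OF y(1) y(2)] by auto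
    have "h1 \<otimes>\<^bsub>L\<^esub> h2 = iota ?J (Emap p k ?J x \<circ> Emap p l ?J y)"
      using x(3) y(3) lift[OF x(1), of ?J] lift[OF y(1), of ?J] mult_iota[OF ex(1) ey(1)] by simp
    then show ?case using closed[OF ex(1) ey(1)] D_comp[OF ex(1) ey(1) ex(2) ey(2)] unfolding DL_def by blast
  qed
qed

lemma DL_comm: "x \<in> DL \<Longrightarrow> prod_of_commutators L 1 x"
proof -
  assume "x \<in> DL"
  then obtain k g where g: "g \<in> carrier (H p k)" "Dk p k g" "x = iota k g" unfolding DL_def by blast
  obtain a b where ab: "a \<in> carrier (H p k)" "b \<in> carrier (H p k)"
    "g = a \<circ> b \<circ> inv\<^bsub>H p k\<^esub> a \<circ> inv\<^bsub>H p k\<^esub> b" using main[OF g(1,2)] by blast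
  have xc: "x = commutator L (iota k a) (iota k b)" using g(3) ab comm_iota[OF ab(1,2)] by simp
  have xin: "x \<in> carrier L" using g(3) iota_in[OF g(1)] by simp
  have "comm_prod L [(iota k a, iota k b)] = x"
  proof -
    interpret GL: group L by (rule group_L)
    show ?thesis using xc xin GL.r_one by simp
  qed
  then show ?thesis unfolding prod_of_commutators_def
    using iota_in[OF ab(1)] iota_in[OF ab(2)]
    by (intro exI[of _ "[(iota k a, iota k b)]"]) auto
qed

lemma nontriv:
  assumes p1: "2 \<le> p 1" and p2: "2 \<le> p 2"
  shows "\<exists>x \<in> derived L (carrier L). x \<noteq> \<one>\<^bsub>L\<^esub>"
proof -
  define M2 :: "nat list \<Rightarrow> int" where
    "M2 u = (if u = [0] then 1 else 0) - (if u = [1] then 1 else 0)" for u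
  define g2 where "g2 = ext p 2 (aut p M2)"
  have g2H: "g2 \<in> carrier (H p 2)" unfolding g2_def using ext_aut_in_H[of p, OF pos] by blast
  have l1: "[0] \<in> lev p 1" "[1] \<in> lev p 1" using p1 by (auto simp: lev_def tree_verts_def)
  have D2: "Dk p 2 g2" unfolding Dk_def
  proof (intro allI impI)
    fix n :: nat assume n: "n < 2"
    have s: "sig p n g2 = lsum p M2 n mod int (p (Suc n))" unfolding g2_def by (rule sig_ext[OF n])
    have "lsum p M2 n = 0"
    proof (cases "n = 0")
      case True then show ?thesis by (simp add: lsum_def lev_0 M2_def)
    next
      case False
      then have n1: "n = 1" using n by simp
      have "lsum p M2 1 = (\<Sum>u\<in>lev p 1. if u = [0] then 1 else 0) - (\<Sum>u\<in>lev p 1. if u = [1] then (1::int) else 0)"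
        unfolding lsum_def M2_def by (rule sum_subtractf)
      also have "\<dots> = 0" using l1 finite_lev[of p 1] by simp
      finally show ?thesis using n1 by simp
    qed
    then show "sig p n g2 = 0" using s by simp
  qed
  obtain a b where ab: "a \<in> carrier (H p 2)" "b \<in> carrier (H p 2)"
    "g2 = a \<circ> b \<circ> inv\<^bsub>H p 2\<^esub> a \<circ> inv\<^bsub>H p 2\<^esub> b" using main[OF g2H D2] by blast
  have xc: "iota 2 g2 = commutator L (iota 2 a) (iota 2 b)" using ab comm_iota[OF ab(1,2)] by simp
  have "iota 2 g2 \<in> derived_set L (carrier L)"
    using xc iota_in[OF ab(1)] iota_in[OF ab(2)] unfolding commutator_def by blast
  then have xd: "iota 2 g2 \<in> derived L (carrier L)" unfolding derived_def by (rule generate.incl)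
  have "iota 2 g2 \<noteq> iota 2 id"
  proof
    assume "iota 2 g2 = iota 2 id"
    then have e: "Phi p 2 g2 = Phi p 2 id" using iota_eq_iff[OF g2H id_in_H] by simp
    have v: "[0, 0] \<in> tvi p" using pos[of 0] pos[of 1] by (auto simp: tvi_def less_Suc_eq)
    have vt: "[0, 0] \<in> tree_verts p 2" using pos[of 0] pos[of 1] by (auto simp: tree_verts_def less_Suc_eq)
    have "Phi p 2 g2 [0, 0] = aut p M2 [0, 0]" using v vt by (simp add: Phi_def g2_def ext_def)
    then have "Phi p 2 g2 [0, 0] ! 1 = nat ((0 + M2 [0]) mod int (p 2))"
      by (simp add: aut_nth numeral_2_eq_2)
    also have "\<dots> = 1" using p2 by (simp add: M2_def)
    finally have "Phi p 2 g2 [0, 0] ! 1 = 1" .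
    moreover have "Phi p 2 id [0, 0] ! 1 = 0" by (simp add: Phi_id)
    ultimately show False using e by simp
  qed
  then show ?thesis using xd one_L[of 2] by metis
qed

end

theorem corollary3:
  fixes p :: "nat \<Rightarrow> nat"
  assumes "\<forall>i \<ge> 1. p i \<ge> 2"
  shows "commutator_width (direct_limit (H p) (system_maps (extend_step p))) = 1"
proof -
  have pos: "\<And>i. 0 < p (Suc i)"
  proof -
    fix i have "p (Suc i) \<ge> 2" using assms by simp
    then show "0 < p (Suc i)" by simp
  qed
  interpret P: posp p by unfold_locales (rule pos)
  let ?L = "direct_limit (H p) (system_maps (extend_step p))"
  have p1: "2 \<le> p 1" and p2: "2 \<le> p 2" using assms by auto
  obtain x0 where x0: "x0 \<in> derived ?L (carrier ?L)" "x0 \<noteq> \<one>\<^bsub>?L\<^esub>" using P.nontriv[OF p1 p2] by blast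
  show ?thesis unfolding commutator_width_def
  proof (rule Least_equality)
    show "\<forall>x\<in>derived ?L (carrier ?L). prod_of_commutators ?L 1 x"
      using P.derived_sub P.DL_comm by blast
  next
    fix m assume m: "\<forall>x\<in>derived ?L (carrier ?L). prod_of_commutators ?L m x"
    show "1 \<le> m"
    proof (rule ccontr)
      assume "\<not> 1 \<le> m"
      then have "m = 0" by simp
      then have "prod_of_commutators ?L 0 x0" using m x0(1) by simp
      then have "x0 = \<one>\<^bsub>?L\<^esub>" unfolding prod_of_commutators_def by auto
      then show False using x0(2) by simp
    qed
  qed
qed

end
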